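(* Let $\mathbf{p},\mathbf{q},\lambda,\mu,\bar d,\bar w$, $q\in(0,1)$, the random variable $X$ and the quantities $p^{(E)}$ be as in the context. Let $0<x\le\bar d\bar w$ and let $\sigma_x=\big((w_i,x_{i1},\dots,x_{i\ell_i})\big)_{1\le i\le d-1}$ be a configuration starting from $x$ that occurs with positive probability. Let $(y_{ij})_{1\le i\le d-1,\,1\le j\le\ell_i}$ be integers such that $y_{ij}\le x_{ij}$ and $\mathbb{P}(X=y_{ij})>0$ for all $i,j$. Let $\sigma'_x=\big((w_i,y'_{i1},\dots,y'_{i\ell_i})\big)_{1\le i\le d-1}$, where for each $i$, $(y'_{i1}\le\dots\le y'_{i\ell_i})$ is the nondecreasing rearrangement of $(y_{i1},\dots,y_{i\ell_i})$. Then $\sigma'_x$ is a configuration starting from $x$ that occurs with positive probability.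
   Context: Standing assumptions: $\mathbf{p}=(p_d)_{d\ge0}$, $\mathbf{q}=(q_w)_{w\ge0}$ are probability distributions on nonnegative integers with $\lambda=\sum_d dp_d\in(0,\infty)$, $\mu=\sum_w wq_w\in(0,\infty)$, $p_d=0$ for $d>\bar d$, $q_w=0$ for $w>\bar w$ (integers $\bar d,\bar w\ge1$), $p_0=q_0=q_1=0$. $X$ is the random variable with $\mathbb{P}(X=k)=\sum_{d=1}^{\bar d}\frac{dp_d}{\lambda}\sum_{(w_1-1)+\dots+(w_{d-1}-1)=k}\frac{\prod_{j=1}^{d-1}w_jq_{w_j}}{\mu^{d-1}}$ (sum over positive integers $w_j$). $p^{(E)}(\ell,x_1,\dots,x_\ell\mid w)=\mathbb{P}(L=\ell,X_{(1)}=x_1,\dots,X_{(\ell)}=x_\ell)$ for $0\le\ell\le w-1$, $x_1\le\dots\le x_\ell$, where: a clique of size $w$ has an initially active vertex $u$ and initially inactive vertices $1,\dots,w-1$; vertex $i$ has $X_i$ further neighbors outside the clique which are inactive and remain inactive (so its degree is $X_i+w-1$), with $X_1,\dots,X_{w-1}$ i.i.d. copies of $X$; in discrete time an inactive vertex becomes active once its proportion of active neighbors is strictly greater than $q$, active vertices staying active; $L$ is the final number of active vertices among $1,\dots,w-1$, and $X_{(1)}\le\dots\le X_{(w-1)}$ the order statistics of the $X_i$. A configuration starting from $x$ is an element $\sigma_x=\big((w_i,x_{i1},\dots,x_{i\ell_i})\big)_{1\le i\le d-1}$ with $1\le d\le\bar d$, $2\le w_i\le\bar w$, $0\le\ell_i\le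 w_i-1$ and $0\le x_{i1}\le\dots\le x_{i\ell_i}\le\bar d\bar w$. It occurs with positive probability if $p_d>0$, $\sum_{i=1}^{d-1}(w_i-1)=x$, and $q_{w_i}>0$ and $p^{(E)}(\ell_i,x_{i1},\dots,x_{i\ell_i}\mid w_i)>0$ for all $1\le i\le d-1$. *)

theory Defs
  imports "HOL-Analysis.Analysis"
begin

definition lam :: "(nat \<Rightarrow> real) \<Rightarrow> real" where
  "lam p = (\<Sum>d. real d * p d)"

definition mu :: "(nat \<Rightarrow> real) \<Rightarrow> real" where
  "mu q = (\<Sum>w. real w * q w)"

text \<open>P(X = k): sum over d = 1..dbar, and over tuples (w_1,...,w_{d-1}) of positive
  integers with (w_1-1)+...+(w_{d-1}-1) = k (necessarily each w_j \<le> k+1).\<close>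
definition pX :: "(nat \<Rightarrow> real) \<Rightarrow> (nat \<Rightarrow> real) \<Rightarrow> nat \<Rightarrow> nat \<Rightarrow> real" where
  "pX p q dbar k =
     (\<Sum>d\<in>{1..dbar}. real d * p d / lam p *
        (\<Sum>ws\<in>{ws. length ws = d - 1 \<and> (\<forall>w\<in>set ws. 1 \<le> w \<and> w \<le> k + 1)
                    \<and> (\<Sum>w\<leftarrow>ws. w - 1) = k}.
           (\<Prod>w\<leftarrow>ws. real w * q w) / mu q ^ (d - 1)))"

text \<open>The clique vertices 1..w-1 are the list positions 0..<length xs (length xs = w-1);
  vertex i has degree xs!i + (w-1) = xs!i + length xs; its active neighbours are u
  and the active clique vertices other than i; all outside neighbours stay inactive.\<close>
definition clique_step :: "real \<Rightarrow> nat list \<Rightarrow> nat set \<Rightarrow> nat set" where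
  "clique_step thr xs A =
     A \<union> {i. i < length xs \<and>
              real (1 + card (A - {i})) / real (xs ! i + length xs) > thr}"

text \<open>Final set of active clique vertices (initially only u is active).\<close>
definition clique_final :: "real \<Rightarrow> nat list \<Rightarrow> nat set" where
  "clique_final thr xs = (\<Union>n. (clique_step thr xs ^^ n) {})"

text \<open>p^(E)(l, ys | w) = P(L = l, X_(1) = ys!0, ..., X_(l) = ys!(l-1)), with
  X_1..X_{w-1} i.i.d. copies of X.\<close>
definition pE :: "real \<Rightarrow> (nat \<Rightarrow> real) \<Rightarrow> (nat \<Rightarrow> real) \<Rightarrow> nat
                   \<Rightarrow> nat \<Rightarrow> nat list \<Rightarrow> nat \<Rightarrow> real" where
  "pE thr p q dbar l ys w =
     infsum (\<lambda>xs. (\<Prod>x\<leftarrow>xs. pX p q dbar x) *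
                  (if card (clique_final thr xs) = l \<and> take l (sort xs) = ys then 1 else 0))
            {xs. length xs = w - 1}"

text \<open>A configuration is a list of length d-1 of entries (w_i, [x_i1,...,x_il_i]);
  d = length cs + 1.\<close>
definition is_config :: "nat \<Rightarrow> nat \<Rightarrow> (nat \<times> nat list) list \<Rightarrow> bool" where
  "is_config dbar wbar cs \<longleftrightarrow>
     1 \<le> length cs + 1 \<and> length cs + 1 \<le> dbar \<and>
     (\<forall>(w, xs)\<in>set cs. 2 \<le> w \<and> w \<le> wbar \<and> length xs \<le> w - 1 \<and> sorted xs \<and>
                       (\<forall>x\<in>set xs. x \<le> dbar * wbar))"

definition config_pos ::
  "real \<Rightarrow> (nat \<Rightarrow> real) \<Rightarrow> (nat \<Rightarrow> real) \<Rightarrow> nat \<Rightarrow> nat \<Rightarrow> (nat \<times> nat list) list \<Rightarrow> bool" where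
  "config_pos thr p q dbar x cs \<longleftrightarrow>
     p (length cs + 1) > 0 \<and> (\<Sum>(w, xs)\<leftarrow>cs. w - 1) = x \<and>
     (\<forall>(w, xs)\<in>set cs. q w > 0 \<and> pE thr p q dbar (length xs) xs w > 0)"

end

theory Submission
  imports Defs "HOL-Combinatorics.Permutations"
begin

abbreviation iter where "iter thr xs k \<equiv> (clique_step thr xs ^^ k) {}"

lemma step_sub: "A \<subseteq> {..<length xs} \<Longrightarrow> clique_step thr xs A \<subseteq> {..<length xs}"
  unfolding clique_step_def by auto

lemma iter_sub: "iter thr xs k \<subseteq> {..<length xs}"
proof (induction k)
  case (Suc k) then show ?case using step_sub[of "iter thr xs k" xs thr] by simp
qed simp

lemma step_mono2:
  assumes "A \<subseteq> B" "finite B" "length ys = length xs" "\<forall>i<length xs. ys ! i \<le> xs ! i"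
  shows "clique_step thr xs A \<subseteq> clique_step thr ys B"
proof
  fix i assume "i \<in> clique_step thr xs A"
  then consider "i \<in> A" | "i < length xs" "real (1 + card (A - {i})) / real (xs ! i + length xs) > thr"
    unfolding clique_step_def by blast
  then show "i \<in> clique_step thr ys B"
  proof cases
    case 1 then show ?thesis using assms unfolding clique_step_def by auto
  next
    case 2
    have c: "card (A - {i}) \<le> card (B - {i})" using assms by (intro card_mono) auto
    have "real (1 + card (A - {i})) / real (xs ! i + length xs)
        \<le> real (1 + card (B - {i})) / real (xs ! i + length xs)"
      using c by (intro divide_right_mono) auto
    also have "\<dots> \<le> real (1 + card (B - {i})) / real (ys ! i + length ys)"
      using assms 2 by (intro divide_left_mono) auto
    finally show ?thesis using 2 assms unfolding clique_step_def by auto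
  qed
qed

lemma iter_mono_xs:
  assumes "length ys = length xs" "\<forall>i<length xs. ys ! i \<le> xs ! i"
  shows "iter thr xs k \<subseteq> iter thr ys k"
proof (induction k)
  case (Suc k)
  have fin: "finite (iter thr ys k)" using iter_sub[where thr=thr and xs=ys and k=k] finite_subset by blast
  show ?case using step_mono2[OF Suc fin assms] by simp
qed simp

lemma iter_Suc_mono: "iter thr xs k \<subseteq> iter thr xs (Suc k)"
proof (induction k)
  case (Suc k)
  have "finite (iter thr xs (Suc k))" using iter_sub[where thr=thr and xs=xs and k="Suc k"] finite_subset by blast
  then show ?case using step_mono2[OF Suc _ refl, where xs=xs and thr=thr] by simp
qed simp

lemma iter_mono: "k \<le> m \<Longrightarrow> iter thr xs k \<subseteq> iter thr xs m"
  using lift_Suc_mono_le[of "\<lambda>k. iter thr xs k", OF iter_Suc_mono] by blast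

lemma final_sub: "clique_final thr xs \<subseteq> {..<length xs}"
  unfolding clique_final_def using iter_sub by blast

lemma final_finite: "finite (clique_final thr xs)"
  using final_sub finite_subset by blast

lemma final_eq_iter: "\<exists>K. clique_final thr xs = iter thr xs K"
proof -
  let ?F = "clique_final thr xs"
  have "\<forall>i\<in>?F. \<exists>k. i \<in> iter thr xs k" unfolding clique_final_def by blast
  then obtain kf where kf: "\<forall>i\<in>?F. i \<in> iter thr xs (kf i)" by metis
  define K where "K = Max (kf ` ?F)"
  have "?F \<subseteq> iter thr xs K"
  proof
    fix i assume i: "i \<in> ?F"
    have "kf i \<le> K" unfolding K_def using i final_finite by auto
    then show "i \<in> iter thr xs K" using iter_mono kf i by blast
  qed
  moreover have "iter thr xs K \<subseteq> ?F" unfolding clique_final_def by blast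
  ultimately show ?thesis by blast
qed

lemma final_closed: "clique_step thr xs (clique_final thr xs) \<subseteq> clique_final thr xs"
proof -
  obtain K where K: "clique_final thr xs = iter thr xs K" using final_eq_iter by blast
  have "clique_step thr xs (iter thr xs K) = iter thr xs (Suc K)" by simp
  also have "\<dots> \<subseteq> clique_final thr xs" unfolding clique_final_def by blast
  finally show ?thesis using K by simp
qed

lemma final_least:
  assumes "B \<subseteq> {..<length xs}" "clique_step thr xs B \<subseteq> B"
  shows "clique_final thr xs \<subseteq> B"
proof -
  have "iter thr xs k \<subseteq> B" for k
  proof (induction k)
    case (Suc k)
    have "finite B" using assms finite_subset by blast
    then show ?case using step_mono2[OF Suc _ refl, where xs=xs and thr=thr] assms by auto
  qed simp
  then show ?thesis unfolding clique_final_def by blast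
qed

lemma final_strict:
  assumes thr: "thr > 0" and i: "i \<in> clique_final thr xs" and j: "j < length xs"
    and jn: "j \<notin> clique_final thr xs"
  shows "xs ! i < xs ! j"
proof (rule ccontr)
  assume "\<not> xs ! i < xs ! j"
  hence le: "xs ! j \<le> xs ! i" by simp
  obtain k where k: "i \<in> iter thr xs k" using i unfolding clique_final_def by blast
  define k0 where "k0 = (LEAST k. i \<in> iter thr xs k)"
  have k0: "i \<in> iter thr xs k0" unfolding k0_def using k by (rule LeastI)
  have "k0 \<noteq> 0" using k0 by (cases k0) auto
  then obtain m where m: "k0 = Suc m" using not0_implies_Suc by blast
  have nm: "i \<notin> iter thr xs m" using not_less_Least[of m "\<lambda>k. i \<in> iter thr xs k"] m k0_def by auto
  let ?A = "iter thr xs m"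
  have ic: "i < length xs \<and> real (1 + card (?A - {i})) / real (xs ! i + length xs) > thr"
    using k0 nm m by (simp add: clique_step_def)
  have jA: "j \<notin> ?A" using jn unfolding clique_final_def by blast
  have cc: "card (?A - {j}) = card (?A - {i})" using jA nm by simp
  have pos: "real (xs ! i + length xs) > 0"
  proof (rule ccontr)
    assume "\<not> ?thesis" then have "real (xs ! i + length xs) = 0" by linarith
    then show False using ic thr by simp
  qed
  have "real (1 + card (?A - {i})) / real (xs ! i + length xs)
        \<le> real (1 + card (?A - {j})) / real (xs ! j + length xs)"
    unfolding cc using le pos j by (intro divide_left_mono) (auto intro!: mult_pos_pos)
  then have "j \<in> iter thr xs (Suc m)" using ic j by (simp add: clique_step_def)
  then show False using jn unfolding clique_final_def by blast
qed

lemma step_perm: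
  assumes f: "f permutes {..<length xs}" and Asub: "A \<subseteq> {..<length xs}"
  shows "clique_step thr (permute_list f xs) {i. i < length xs \<and> f i \<in> A}
       = {i. i < length xs \<and> f i \<in> clique_step thr xs A}"
proof -
  let ?B = "{i. i < length xs \<and> f i \<in> A}"
  have bij: "bij_betw f {..<length xs} {..<length xs}" using f by (rule permutes_imp_bij)
  have card_eq: "card (?B - {i}) = card (A - {f i})" if "i < length xs" for i
  proof -
    have "bij_betw f (?B - {i}) (A - {f i})"
    proof -
      have "?B - {i} \<subseteq> {..<length xs}" by auto
      then have "inj_on f (?B - {i})" using bij bij_betw_imp_inj_on inj_on_subset by blast
      moreover have "f ` (?B - {i}) = A - {f i}"
      proof
        show "f ` (?B - {i}) \<subseteq> A - {f i}"
          using bij that by (auto simp: bij_betw_def inj_on_def)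
        show "A - {f i} \<subseteq> f ` (?B - {i})"
        proof
          fix a assume a: "a \<in> A - {f i}"
          then have "a < length xs" using Asub by auto
          then have "a \<in> f ` {..<length xs}" using bij by (simp add: bij_betw_def)
          then obtain b where b: "b < length xs" "f b = a" by auto
          then show "a \<in> f ` (?B - {i})" using a by auto
        qed
      qed
      ultimately show ?thesis by (simp add: bij_betw_def)
    qed
    then show ?thesis by (rule bij_betw_same_card)
  qed
  have fi: "i < length xs \<Longrightarrow> f i < length xs" for i using permutes_in_image[OF f] by auto
  show ?thesis
  proof (rule set_eqI)
    fix i
    show "i \<in> clique_step thr (permute_list f xs) ?B \<longleftrightarrow> i \<in> {i. i < length xs \<and> f i \<in> clique_step thr xs A}"
    proof (cases "i < length xs")
      case True
      have e: "real (1 + card (?B - {i})) / real (permute_list f xs ! i + length xs)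
             = real (1 + card (A - {f i})) / real (xs ! f i + length xs)"
        using card_eq[OF True] permute_list_nth[OF f True] by simp
      show ?thesis unfolding clique_step_def Un_iff mem_Collect_eq length_permute_list e using True fi[OF True] by blast
    next
      case False
      then show ?thesis unfolding clique_step_def by auto
    qed
  qed
qed

lemma iter_perm:
  assumes f: "f permutes {..<length xs}"
  shows "iter thr (permute_list f xs) k = {i. i < length xs \<and> f i \<in> iter thr xs k}"
proof (induction k)
  case 0 then show ?case by simp
next
  case (Suc k)
  have "iter thr (permute_list f xs) (Suc k) = clique_step thr (permute_list f xs) (iter thr (permute_list f xs) k)"
    by simp
  also have "\<dots> = {i. i < length xs \<and> f i \<in> clique_step thr xs (iter thr xs k)}"
    unfolding Suc by (rule step_perm[OF f iter_sub])
  finally show ?case by simp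
qed

lemma card_final_perm:
  assumes f: "f permutes {..<length xs}"
  shows "card (clique_final thr (permute_list f xs)) = card (clique_final thr xs)"
proof -
  let ?F = "clique_final thr xs"
  have eq: "clique_final thr (permute_list f xs) = {i. i < length xs \<and> f i \<in> ?F}"
    unfolding clique_final_def using iter_perm[OF f] by auto
  have bij: "bij_betw f {..<length xs} {..<length xs}" using f by (rule permutes_imp_bij)
  have "bij_betw f {i. i < length xs \<and> f i \<in> ?F} ?F"
  proof -
    have "inj_on f {i. i < length xs \<and> f i \<in> ?F}"
      using bij by (auto simp: bij_betw_def inj_on_def)
    moreover have "f ` {i. i < length xs \<and> f i \<in> ?F} = ?F"
    proof
      show "?F \<subseteq> f ` {i. i < length xs \<and> f i \<in> ?F}"
      proof
        fix a assume a: "a \<in> ?F"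
        then have "a < length xs" using final_sub by auto
        then have "a \<in> f ` {..<length xs}" using bij by (simp add: bij_betw_def)
          then obtain b where b: "b < length xs" "f b = a" by auto
        then show "a \<in> f ` {i. i < length xs \<and> f i \<in> ?F}" using a by auto
      qed
    qed auto
    ultimately show ?thesis by (simp add: bij_betw_def)
  qed
  then show ?thesis using eq bij_betw_same_card by metis
qed


lemma core:
  assumes thr: "thr > 0" and card: "card (clique_final thr zs) = l"
    and tk: "take l (sort zs) = xs" and sy: "sorted sy" "length sy = l" "\<forall>j<l. sy ! j \<le> xs ! j"
  shows "length (sy @ drop l (sort zs)) = length zs \<and>
         card (clique_final thr (sy @ drop l (sort zs))) = l \<and>
         take l (sort (sy @ drop l (sort zs))) = sy"
proof -
  define s where "s = sort zs"
  define n where "n = length zs"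
  have ls: "length s = n" unfolding s_def n_def by simp
  have ss: "sorted s" unfolding s_def by simp
  have "mset s = mset zs" unfolding s_def by simp
  then obtain f where f: "f permutes {..<length zs}" "permute_list f zs = s"
    using mset_eq_permutation by metis
  have cs: "card (clique_final thr s) = l" using card_final_perm[OF f(1)] f(2) card by simp
  let ?F = "clique_final thr s"
  have Fsub: "?F \<subseteq> {..<n}" using final_sub[of thr s] ls by simp
  have ln: "l \<le> n" using card_mono[OF _ Fsub] cs by simp
  have down: "i \<in> ?F" if "j \<in> ?F" "i < j" for i j
  proof (rule ccontr)
    assume "i \<notin> ?F"
    moreover have "j < n" using that Fsub by auto
    ultimately have "s ! j < s ! i" using final_strict[OF thr that(1), of i] ls that by simp
    moreover have "s ! i \<le> s ! j" using ss that \<open>j < n\<close> ls by (simp add: sorted_nth_mono)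
    ultimately show False by simp
  qed
  have Feq: "?F = {..<l}"
  proof
    show "?F \<subseteq> {..<l}"
    proof
      fix i assume i: "i \<in> ?F"
      show "i \<in> {..<l}"
      proof (rule ccontr)
        assume "i \<notin> {..<l}"
        then have "{..i} \<subseteq> ?F" using down i by (auto simp: le_less)
        then have "card {..i} \<le> l" using card_mono[OF final_finite] cs by metis
        then show False using \<open>i \<notin> {..<l}\<close> by simp
      qed
    qed
    show "{..<l} \<subseteq> ?F"
    proof
      fix i assume i: "i \<in> {..<l}"
      show "i \<in> ?F"
      proof (rule ccontr)
        assume ni: "i \<notin> ?F"
        have "?F \<subseteq> {..<i}"
        proof
          fix j assume "j \<in> ?F"
          then show "j \<in> {..<i}" using down[of j i] ni by (cases "i < j") (auto simp: not_less le_less)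
        qed
        then have "card ?F \<le> i" using card_mono[of "{..<i}"] by fastforce
        then show False using cs i by simp
      qed
    qed
  qed
  define zs' where "zs' = sy @ drop l s"
  have lz: "length zs' = n" unfolding zs'_def using sy ls ln by simp
  have nth_lo: "zs' ! i = sy ! i" if "i < l" for i unfolding zs'_def using that sy by (simp add: nth_append)
  have nth_hi: "zs' ! i = s ! i" if "l \<le> i" "i < n" for i
    unfolding zs'_def using that sy ln ls by (simp add: nth_append)
  have le: "\<forall>i<length s. zs' ! i \<le> s ! i"
  proof (intro allI impI)
    fix i assume i: "i < length s"
    show "zs' ! i \<le> s ! i"
    proof (cases "i < l")
      case True
      have "xs ! i = s ! i" using tk True unfolding s_def[symmetric] by auto
      then show ?thesis using nth_lo[OF True] sy(3) True by metis
    next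
      case False then show ?thesis using nth_hi i ls by simp
    qed
  qed
  have sub1: "?F \<subseteq> clique_final thr zs'"
  proof -
    have "iter thr s k \<subseteq> iter thr zs' k" for k
      using iter_mono_xs[of zs' s, OF _ le] lz ls by simp
    then show ?thesis unfolding clique_final_def by blast
  qed
  have clo: "clique_step thr zs' ?F \<subseteq> ?F"
  proof
    fix i assume i: "i \<in> clique_step thr zs' ?F"
    show "i \<in> ?F"
    proof (rule ccontr)
      assume ni: "i \<notin> ?F"
      then have rat: "i < length zs'" "real (1 + card (?F - {i})) / real (zs' ! i + length zs') > thr"
        using i unfolding clique_step_def by auto
      have "l \<le> i" using ni Feq by auto
      then have "zs' ! i = s ! i" using nth_hi rat lz by simp
      then have "i \<in> clique_step thr s ?F" using rat lz ls unfolding clique_step_def by auto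
      then show False using final_closed ni by blast
    qed
  qed
  have sub2: "clique_final thr zs' \<subseteq> ?F"
    by (rule final_least) (use Fsub lz clo in auto)
  have sorted': "sorted zs'"
    unfolding zs'_def sorted_append
  proof (intro conjI ballI)
    show "sorted sy" by (rule sy)
    show "sorted (drop l s)" using ss by (simp add: sorted_wrt_drop)
    fix a b assume a: "a \<in> set sy" and b: "b \<in> set (drop l s)"
    obtain j where j: "j < l" "a = sy ! j" using a sy by (auto simp: in_set_conv_nth)
    obtain k where k: "k < n - l" "b = s ! (l + k)" using b ls ln by (auto simp: in_set_conv_nth)
    have "xs ! j = s ! j" using tk j unfolding s_def[symmetric] by auto
    then have "a \<le> s ! j" using sy(3) j by metis
    also have "\<dots> \<le> s ! (l + k)" using ss j k ls by (intro sorted_nth_mono) auto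
    finally show "a \<le> b" using k by simp
  qed
  have "sort zs' = zs'" using sorted' by (simp add: sorted_sort_id)
  then have "take l (sort zs') = sy" unfolding zs'_def using sy by simp
  moreover have "card (clique_final thr zs') = l" using sub1 sub2 cs by auto
  ultimately show ?thesis using lz unfolding zs'_def s_def n_def by simp
qed


lemma sort_le_pointwise:
  fixes a b :: "nat list"
  assumes len: "length a = length b" and sb: "sorted b" and le: "\<forall>j<length b. a ! j \<le> b ! j"
    and j: "j < length b"
  shows "sort a ! j \<le> b ! j"
proof (rule ccontr)
  assume "\<not> ?thesis"
  hence gt: "b ! j < sort a ! j" by simp
  let ?c = "b ! j"
  let ?sa = "sort a"
  have lsa: "length ?sa = length b" using len by simp
  have "{k. k < length ?sa \<and> ?sa ! k \<le> ?c} \<subseteq> {..<j}"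
  proof
    fix k assume k: "k \<in> {k. k < length ?sa \<and> ?sa ! k \<le> ?c}"
    show "k \<in> {..<j}"
    proof (rule ccontr)
      assume "k \<notin> {..<j}"
      then have "?sa ! j \<le> ?sa ! k" using k by (intro sorted_nth_mono) auto
      then show False using k gt by simp
    qed
  qed
  then have c1: "length (filter (\<lambda>v. v \<le> ?c) ?sa) \<le> j"
    unfolding length_filter_conv_card using card_mono[of "{..<j}"] by fastforce
  have "{..j} \<subseteq> {k. k < length a \<and> a ! k \<le> ?c}"
  proof
    fix k assume "k \<in> {..j}"
    then have "k \<le> j" by simp
    then have "a ! k \<le> b ! k" "b ! k \<le> b ! j" using le j sb by (auto intro: sorted_nth_mono)
    then show "k \<in> {k. k < length a \<and> a ! k \<le> ?c}" using \<open>k \<le> j\<close> j len by auto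
  qed
  then have c2: "Suc j \<le> length (filter (\<lambda>v. v \<le> ?c) a)"
    unfolding length_filter_conv_card using card_mono[of "{k. k < length a \<and> a ! k \<le> ?c}" "{..j}"] by fastforce
  have "length (filter (\<lambda>v. v \<le> ?c) ?sa) = length (filter (\<lambda>v. v \<le> ?c) a)"
    by (simp add: filter_sort)
  then show False using c1 c2 by simp
qed

lemma prod_list_pos: "(\<forall>x\<in>set xs. (0::real) < f x) \<Longrightarrow> 0 < prod_list (map f xs)"
  by (induction xs) auto

lemma sum_bound: "(\<forall>w\<in>set ws. w \<le> c) \<Longrightarrow> (\<Sum>w\<leftarrow>ws. w - 1) \<le> length ws * (c::nat)"
  by (induction ws) auto

lemma pX_nonneg:
  assumes "\<forall>d. p d \<ge> 0" "\<forall>w. q w \<ge> 0" "lam p > 0" "mu q > 0"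
  shows "pX p q dbar k \<ge> 0"
  unfolding pX_def using assms
  by (intro sum_nonneg mult_nonneg_nonneg divide_nonneg_nonneg prod_list_nonneg) auto

lemma pX_zero:
  assumes q_supp: "\<forall>w>wbar. q w = 0" and k: "k > dbar * wbar"
  shows "pX p q dbar k = 0"
  unfolding pX_def
proof (intro sum.neutral ballI)
  fix d assume d: "d \<in> {1..dbar}"
  have "(\<Prod>w\<leftarrow>ws. real w * q w) = 0"
    if ws: "ws \<in> {ws. length ws = d - 1 \<and> (\<forall>w\<in>set ws. 1 \<le> w \<and> w \<le> k + 1) \<and> (\<Sum>w\<leftarrow>ws. w - 1) = k}" for ws
  proof (rule ccontr)
    assume "(\<Prod>w\<leftarrow>ws. real w * q w) \<noteq> 0"
    then have "\<forall>w\<in>set ws. q w \<noteq> 0" by (auto simp: prod_list_zero_iff)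
    then have "\<forall>w\<in>set ws. w \<le> wbar" using q_supp by (meson not_le)
    then have "(\<Sum>w\<leftarrow>ws. w - 1) \<le> length ws * wbar" by (rule sum_bound)
    also have "\<dots> \<le> dbar * wbar" using ws d by (intro mult_right_mono) auto
    finally show False using ws k by simp
  qed
  then show "real d * p d / lam p *
        (\<Sum>ws\<in>{ws. length ws = d - 1 \<and> (\<forall>w\<in>set ws. 1 \<le> w \<and> w \<le> k + 1)
                    \<and> (\<Sum>w\<leftarrow>ws. w - 1) = k}.
           (\<Prod>w\<leftarrow>ws. real w * q w) / mu q ^ (d - 1)) = 0" by simp
qed

lemma pE_witness:
  assumes "pE thr p q dbar l xs w > 0"
  shows "\<exists>zs. length zs = w - 1 \<and> prod_list (map (pX p q dbar) zs) \<noteq> 0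
           \<and> card (clique_final thr zs) = l \<and> take l (sort zs) = xs"
proof (rule ccontr)
  assume "\<not> ?thesis"
  then have "\<forall>zs\<in>{xs. length xs = w - 1}. (\<Prod>x\<leftarrow>zs. pX p q dbar x) *
                  (if card (clique_final thr zs) = l \<and> take l (sort zs) = xs then 1 else 0) = 0"
    by auto
  then have "pE thr p q dbar l xs w = 0" unfolding pE_def by (intro infsum_0) auto
  then show False using assms by simp
qed

lemma pE_pos:
  assumes nn: "\<forall>d. p d \<ge> 0" "\<forall>w. q w \<ge> 0" "lam p > 0" "mu q > 0"
    and q_supp: "\<forall>w>wbar. q w = 0"
    and zs: "length zs = w - 1" "\<forall>z\<in>set zs. pX p q dbar z > 0"
    "card (clique_final thr zs) = l" "take l (sort zs) = xs"
  shows "pE thr p q dbar l xs w > 0"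
proof -
  define g where "g = (\<lambda>xs'. (\<Prod>x\<leftarrow>xs'. pX p q dbar x) *
                  (if card (clique_final thr xs') = l \<and> take l (sort xs') = xs then 1 else (0::real)))"
  define S where "S = {xs'::nat list. length xs' = w - 1}"
  define T where "T = {xs'. set xs' \<subseteq> {..dbar*wbar} \<and> length xs' = w - 1}"
  have finT: "finite T" unfolding T_def by (rule finite_lists_length_eq) simp
  have gnn: "g xs' \<ge> 0" for xs'
    unfolding g_def using pX_nonneg[OF nn] by (auto intro!: prod_list_nonneg)
  have z: "g xs' = 0" if xST: "xs' \<in> S - T" for xs'
  proof -
    obtain x where x: "x \<in> set xs'" "x > dbar * wbar" using xST unfolding S_def T_def by (auto simp: subset_iff not_le)
    have "pX p q dbar x = 0" using pX_zero[OF q_supp x(2)] .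
    then have "(\<Prod>x\<leftarrow>xs'. pX p q dbar x) = 0" using x(1) by (force simp: prod_list_zero_iff)
    then show ?thesis unfolding g_def by simp
  qed
  have "infsum g S = infsum g (S \<inter> T)"
    by (rule infsum_cong_neutral) (use z in auto)
  also have "\<dots> = sum g (S \<inter> T)" using finT by simp
  finally have eq: "infsum g S = sum g (S \<inter> T)" .
  have zsT: "zs \<in> S \<inter> T"
  proof -
    have "\<forall>z\<in>set zs. z \<le> dbar * wbar"
      using zs(2) pX_zero[OF q_supp] by (metis less_irrefl not_le)
    then show ?thesis unfolding S_def T_def using zs(1) by auto
  qed
  have gz: "g zs > 0" unfolding g_def using zs prod_list_pos[of zs "pX p q dbar"] by simp
  have "g zs \<le> sum g (S \<inter> T)" using finT zsT gnn by (intro member_le_sum) auto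
  then have "infsum g S > 0" using eq gz by simp
  then show ?thesis unfolding pE_def g_def S_def .
qed


lemma sum_pairs: "(\<Sum>(w, xs)\<leftarrow>L. w - 1) = (\<Sum>w\<leftarrow>map fst L. w - (1::nat))"
  by (induction L) auto

theorem lemma3:
  fixes p q :: "nat \<Rightarrow> real" and dbar wbar x :: nat and thr :: real
    and cs :: "(nat \<times> nat list) list" and ys :: "nat list list"
  assumes p_nonneg: "\<forall>d. p d \<ge> 0" and p_sum: "p sums 1"
    and q_nonneg: "\<forall>w. q w \<ge> 0" and q_sum: "q sums 1"
    and lam_pos: "lam p > 0" and mu_pos: "mu q > 0"
    and dbar: "dbar \<ge> 1" and wbar: "wbar \<ge> 1"
    and p_supp: "\<forall>d>dbar. p d = 0" and q_supp: "\<forall>w>wbar. q w = 0"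
    and p0: "p 0 = 0" and q0: "q 0 = 0" and q1: "q 1 = 0"
    and thr: "0 < thr" "thr < 1"
    and x: "0 < x" "x \<le> dbar * wbar"
    and cfg: "is_config dbar wbar cs" and cfg_pos: "config_pos thr p q dbar x cs"
    and ys_len: "length ys = length cs"
    and ys_len': "\<forall>i<length cs. length (ys ! i) = length (snd (cs ! i))"
    and ys_le: "\<forall>i<length cs. \<forall>j<length (ys ! i). ys ! i ! j \<le> snd (cs ! i) ! j"
    and ys_pos: "\<forall>i<length cs. \<forall>j<length (ys ! i). pX p q dbar (ys ! i ! j) > 0"
  shows "is_config dbar wbar (map (\<lambda>i. (fst (cs ! i), sort (ys ! i))) [0..<length cs])
       \<and> config_pos thr p q dbar x (map (\<lambda>i. (fst (cs ! i), sort (ys ! i))) [0..<length cs])"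
proof -
  define cs' where "cs' = map (\<lambda>i. (fst (cs ! i), sort (ys ! i))) [0..<length cs]"
  have lcs': "length cs' = length cs" unfolding cs'_def by simp
  have mem: "\<exists>i<length cs. w = fst (cs ! i) \<and> xs' = sort (ys ! i)" if "(w, xs') \<in> set cs'" for w xs'
    using that unfolding cs'_def by auto
  have cfgI: "2 \<le> fst (cs ! i) \<and> fst (cs ! i) \<le> wbar \<and> length (snd (cs ! i)) \<le> fst (cs ! i) - 1
      \<and> sorted (snd (cs ! i)) \<and> (\<forall>x\<in>set (snd (cs ! i)). x \<le> dbar * wbar)" if "i < length cs" for i
  proof -
    have "cs ! i \<in> set cs" using that by simp
    note P = bspec[OF conjunct2[OF conjunct2[OF cfg[unfolded is_config_def]]] this]
    show ?thesis using P by (simp add: case_prod_beta)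
  qed
  have posI: "q (fst (cs ! i)) > 0 \<and> pE thr p q dbar (length (snd (cs ! i))) (snd (cs ! i)) (fst (cs ! i)) > 0"
    if "i < length cs" for i
  proof -
    have "cs ! i \<in> set cs" using that by simp
    note P = bspec[OF conjunct2[OF conjunct2[OF cfg_pos[unfolded config_pos_def]]] this]
    show ?thesis using P by (simp add: case_prod_beta)
  qed
  have conf: "is_config dbar wbar cs'"
    unfolding is_config_def
  proof (intro conjI ballI)
    show "1 \<le> length cs' + 1" by simp
    show "length cs' + 1 \<le> dbar" using cfg lcs' unfolding is_config_def by simp
    fix e assume e: "e \<in> set cs'"
    obtain w xs' where e': "e = (w, xs')" by (cases e)
    then obtain i where i: "i < length cs" "w = fst (cs ! i)" "xs' = sort (ys ! i)" using mem e by blast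
    have bnd: "\<forall>y\<in>set xs'. y \<le> dbar * wbar"
    proof
      fix y assume "y \<in> set xs'"
      then have "y \<in> set (ys ! i)" using i by simp
      then obtain j where j: "j < length (ys ! i)" "y = ys ! i ! j" by (auto simp: in_set_conv_nth)
      have "snd (cs ! i) ! j \<in> set (snd (cs ! i))" using j ys_len' i by simp
      then have "snd (cs ! i) ! j \<le> dbar * wbar" using cfgI[OF i(1)] by blast
      moreover have "ys ! i ! j \<le> snd (cs ! i) ! j" using ys_le i(1) j(1) by blast
      ultimately show "y \<le> dbar * wbar" using j(2) by simp
    qed
    show "case e of (w, xs) \<Rightarrow> 2 \<le> w \<and> w \<le> wbar \<and> length xs \<le> w - 1 \<and> sorted xs \<and>
                       (\<forall>x\<in>set xs. x \<le> dbar * wbar)"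
      using cfgI[OF i(1)] ys_len' i bnd e' by simp
  qed
  have cpos: "config_pos thr p q dbar x cs'"
    unfolding config_pos_def
  proof (intro conjI ballI)
    show "p (length cs' + 1) > 0" using cfg_pos lcs' unfolding config_pos_def by simp
    have mf: "map fst cs' = map fst cs" unfolding cs'_def by (rule nth_equalityI) auto
    have s1: "(\<Sum>(w, xs)\<leftarrow>cs. w - 1) = x" using cfg_pos unfolding config_pos_def by blast
    show "(\<Sum>(w, xs)\<leftarrow>cs'. w - 1) = x" using s1 by (simp only: sum_pairs mf)
    fix e assume e: "e \<in> set cs'"
    obtain w xs' where e': "e = (w, xs')" by (cases e)
    then obtain i where i: "i < length cs" "w = fst (cs ! i)" "xs' = sort (ys ! i)" using mem e by blast
    let ?xs = "snd (cs ! i)"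
    let ?l = "length ?xs"
    obtain zs where zs: "length zs = w - 1" "prod_list (map (pX p q dbar) zs) \<noteq> 0"
      "card (clique_final thr zs) = ?l" "take ?l (sort zs) = ?xs"
      using pE_witness[of thr p q dbar ?l ?xs w] posI[OF i(1)] i by blast
    have zpos: "\<forall>z\<in>set zs. pX p q dbar z > 0"
    proof
      fix z assume "z \<in> set zs"
      then have "pX p q dbar z \<noteq> 0" using zs(2) by (force simp: prod_list_zero_iff)
      then show "pX p q dbar z > 0" using pX_nonneg[OF p_nonneg q_nonneg lam_pos mu_pos, of dbar z] by simp
    qed
    have sy_le: "\<forall>j<?l. sort (ys ! i) ! j \<le> ?xs ! j"
      using sort_le_pointwise[of "ys ! i" ?xs] ys_len' ys_le cfgI[OF i(1)] i(1) by simp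
    have lsy: "length (sort (ys ! i)) = ?l" using ys_len' i by simp
    have C: "length (sort (ys ! i) @ drop ?l (sort zs)) = length zs \<and>
         card (clique_final thr (sort (ys ! i) @ drop ?l (sort zs))) = ?l \<and>
         take ?l (sort (sort (ys ! i) @ drop ?l (sort zs))) = sort (ys ! i)"
      by (rule core[OF thr(1) zs(3) zs(4)]) (use sy_le lsy in auto)
    have allpos: "\<forall>z\<in>set (sort (ys ! i) @ drop ?l (sort zs)). pX p q dbar z > 0"
    proof
      fix z assume z: "z \<in> set (sort (ys ! i) @ drop ?l (sort zs))"
      show "pX p q dbar z > 0"
      proof (cases "z \<in> set (ys ! i)")
        case True
        then obtain j where "j < length (ys ! i)" "z = ys ! i ! j" by (auto simp: in_set_conv_nth)
        then show ?thesis using ys_pos i by auto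
      next
        case False
        then have "z \<in> set zs" using z set_drop_subset by fastforce
        then show ?thesis using zpos by auto
      qed
    qed
    have "pE thr p q dbar ?l (sort (ys ! i)) w > 0"
      by (rule pE_pos[OF p_nonneg q_nonneg lam_pos mu_pos q_supp, of "sort (ys ! i) @ drop ?l (sort zs)"])
         (use C zs(1) allpos in auto)
    then show "case e of (w, xs) \<Rightarrow> q w > 0 \<and> pE thr p q dbar (length xs) xs w > 0"
      using e' i posI[OF i(1)] lsy by simp
  qed
  show ?thesis using conf cpos unfolding cs'_def by simp
qed

end
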